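(* Let $m\ge2$, let $\eta$ be a primitive $m$-th root of unity, and let $F(x,y)=(x+y)^m$. Consider real polynomials $G(x,y)$ such that $G(\eta x,\eta y)=G(x,y)$, $G=1$ on the line $x+y=1$, $G$ has only non-negative coefficients, $G(0,0)=0$, and such that the polynomial $H=(G-F)/(F-1)$ (so that $G=F-H+HF$) has only non-negative coefficients. For such $G$, the number of terms $N(G)$ is either $m+1$ or at least $2m+1$; that is, $N(G)$ lies neither in $\{1,\dots,m\}$ nor in $\{m+2,\dots,2m\}$. Conversely, $m+1$ and every integer $N\ge 2m+1$ occur as $N(G)$ for some such $G$.
   Context: $N(q)$ denotes the number of distinct monomials with nonzero coefficient in $q$. For $G$ as described, $G-F$ is divisible by $F-1$, so $H$ is a polynomial. *)

theory Defs
  imports Complex_Main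
begin

text \<open>Real bivariate polynomials are represented by their coefficient functions:
  c (i,j) is the coefficient of x^i y^j; only finitely many are nonzero.\<close>

type_synonym bipoly = "nat \<times> nat \<Rightarrow> real"

definition supp2 :: "bipoly \<Rightarrow> (nat \<times> nat) set" where
  "supp2 c = {p. c p \<noteq> 0}"

definition is_bipoly :: "bipoly \<Rightarrow> bool" where
  "is_bipoly c \<longleftrightarrow> finite (supp2 c)"

definition beval :: "bipoly \<Rightarrow> 'a::{real_algebra_1,comm_ring_1} \<Rightarrow> 'a \<Rightarrow> 'a" where
  "beval c x y = (\<Sum>p\<in>supp2 c. of_real (c p) * x ^ fst p * y ^ snd p)"

definition nterms :: "bipoly \<Rightarrow> nat" where
  "nterms c = card (supp2 c)"

definition admissible :: "nat \<Rightarrow> complex \<Rightarrow> bipoly \<Rightarrow> bool" where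
  "admissible m \<eta> G \<longleftrightarrow>
     is_bipoly G \<and>
     (\<forall>x y :: complex. beval G (\<eta> * x) (\<eta> * y) = beval G x y) \<and>
     (\<forall>x y :: real. x + y = 1 \<longrightarrow> beval G x y = 1) \<and>
     (\<forall>p. G p \<ge> 0) \<and>
     G (0, 0) = 0 \<and>
     (\<exists>H. is_bipoly H \<and> (\<forall>p. H p \<ge> 0) \<and>
        (\<forall>x y :: real. beval G x y = (x + y) ^ m - beval H x y + beval H x y * (x + y) ^ m))"

end

theory Submission
  imports Defs "HOL-Computational_Algebra.Polynomial"
begin

type_synonym pp = "real poly poly"

definition cf :: "pp \<Rightarrow> bipoly" where
  "cf P = (\<lambda>(i,j). coeff (coeff P j) i)"

definition toP :: "bipoly \<Rightarrow> pp" where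
  "toP c = (\<Sum>q\<in>supp2 c. monom (monom (c q) (fst q)) (snd q))"

definition ev :: "pp \<Rightarrow> real \<Rightarrow> real \<Rightarrow> real" where
  "ev P x y = poly (poly P [:y:]) x"

lemma ev_add[simp]: "ev (P + R) x y = ev P x y + ev R x y"
  and ev_diff[simp]: "ev (P - R) x y = ev P x y - ev R x y"
  and ev_mult[simp]: "ev (P * R) x y = ev P x y * ev R x y"
  and ev_one[simp]: "ev 1 x y = 1"
  and ev_zero[simp]: "ev 0 x y = 0"
  and ev_power[simp]: "ev (P ^ n) x y = ev P x y ^ n"
  and ev_sum: "ev (sum f A) x y = (\<Sum>a\<in>A. ev (f a) x y)"
  by (simp_all add: ev_def poly_sum)

lemma cf_add[simp]: "cf (P + R) p = cf P p + cf R p"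
  and cf_diff[simp]: "cf (P - R) p = cf P p - cf R p"
  and cf_zero[simp]: "cf 0 p = 0"
  and cf_one: "cf 1 p = (if p = (0,0) then 1 else 0)"
  and cf_sum: "cf (sum f A) p = (\<Sum>a\<in>A. cf (f a) p)"
  by (auto simp: cf_def coeff_sum split: prod.splits)

lemma cf_toP:
  assumes "is_bipoly c"
  shows "cf (toP c) = c"
proof
  fix p :: "nat \<times> nat"
  obtain i j where p: "p = (i,j)" by (cases p)
  have "cf (toP c) p = (\<Sum>q\<in>supp2 c. (if q = p then c q else 0))"
    using p by (auto simp: cf_def toP_def coeff_sum coeff_monom intro!: sum.cong)
  also have "\<dots> = c p"
    using assms by (simp add: is_bipoly_def supp2_def)
  finally show "cf (toP c) p = c p" .
qed

lemma ev_toP: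
  "ev (toP c) x y = beval c x y"
  by (simp add: toP_def ev_sum beval_def ev_def poly_monom poly_sum mult.assoc)

lemma coeff_poly_const:
  "coeff (poly P [:y:]) i = poly (map_poly (\<lambda>q. coeff q i) P) y"
proof (induction P)
  case (pCons a P)
  then show ?case by (simp add: map_poly_pCons)
qed simp

lemma ev_unique:
  assumes "\<And>x y. ev P x y = 0"
  shows "P = 0"
proof -
  have "\<And>y. poly P [:y:] = 0"
    using assms poly_all_0_iff_0 unfolding ev_def by blast
  then have "\<And>y i. poly (map_poly (\<lambda>q. coeff q i) P) y = 0"
    by (metis coeff_0 coeff_poly_const)
  then have "\<And>i. map_poly (\<lambda>q. coeff q i) P = 0"
    using poly_all_0_iff_0 by blast
  then have "\<And>i j. coeff (coeff P j) i = 0"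
    by (metis coeff_0 coeff_map_poly)
  then show ?thesis
    by (intro poly_eqI) (simp add: poly_eqI)
qed

lemma ev_unique_eq:
  assumes "\<And>x y. ev P x y = ev R x y"
  shows "P = R"
  using ev_unique[of "P - R"] assms by simp

lemma cf_inj:
  assumes "cf P = cf R" shows "P = R"
proof (intro poly_eqI)
  fix j i
  have "cf P (i,j) = cf R (i,j)" using assms by simp
  then show "coeff (coeff P j) i = coeff (coeff R j) i" by (simp add: cf_def)
qed

lemma cf_finite: "is_bipoly (cf P)"
proof -
  define M where "M = Max ((\<lambda>l. degree (coeff P l)) ` {..degree P})"
  have "supp2 (cf P) \<subseteq> {..M} \<times> {..degree P}"
  proof
    fix p assume "p \<in> supp2 (cf P)"
    then obtain i j where p: "p = (i,j)" and nz: "coeff (coeff P j) i \<noteq> 0"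
      by (cases p) (auto simp: supp2_def cf_def)
    then have j: "j \<le> degree P"
      by (metis coeff_0 le_degree)
    have "i \<le> degree (coeff P j)" using nz le_degree by blast
    also have "\<dots> \<le> M" unfolding M_def using j by (intro Max_ge) auto
    finally show "p \<in> {..M} \<times> {..degree P}" using p j by simp
  qed
  then show ?thesis unfolding is_bipoly_def by (rule finite_subset) simp
qed

lemma toP_cf: "toP (cf P) = P"
  by (rule cf_inj) (simp add: cf_toP cf_finite)

lemma beval_cf: "beval (cf P) x y = ev P x y"
  by (metis ev_toP toP_cf)


lemma cf_mult: "cf (A * B) (i,j) = (\<Sum>l\<le>j. \<Sum>k\<le>i. cf A (k,l) * cf B (i-k, j-l))"
  by (simp add: cf_def coeff_mult coeff_sum)

definition nonneg :: "pp \<Rightarrow> bool" where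
  "nonneg P \<longleftrightarrow> (\<forall>p. cf P p \<ge> 0)"

lemma cf_mult_nonneg:
  assumes "nonneg A" "nonneg B" shows "cf (A * B) p \<ge> 0"
proof -
  obtain i j where p: "p = (i,j)" by (cases p)
  have "cf (A * B) (i,j) \<ge> 0" using assms unfolding cf_mult nonneg_def
    by (auto intro!: sum_nonneg mult_nonneg_nonneg)
  then show ?thesis using p by simp
qed

lemma cf_mult_ge:
  assumes "nonneg A" "nonneg B"
  shows "cf (A * B) (i1+i2, j1+j2) \<ge> cf A (i1,j1) * cf B (i2,j2)"
proof -
  let ?f = "\<lambda>l. \<Sum>k\<le>i1+i2. cf A (k,l) * cf B (i1+i2-k, j1+j2-l)"
  have nn: "\<And>k l a b. cf A (k,l) * cf B (a, b) \<ge> 0"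
    using assms unfolding nonneg_def by (auto intro!: mult_nonneg_nonneg)
  have "cf A (i1,j1) * cf B (i2,j2) = cf A (i1,j1) * cf B (i1+i2-i1, j1+j2-j1)" by simp
  also have "\<dots> \<le> ?f j1"
    by (rule member_le_sum[where f="\<lambda>k. cf A (k,j1) * cf B (i1+i2-k, j1+j2-j1)"]) (use nn in auto)
  also have "\<dots> \<le> (\<Sum>l\<le>j1+j2. ?f l)"
    by (rule member_le_sum) (use nn in \<open>auto intro!: sum_nonneg\<close>)
  finally show ?thesis by (simp add: cf_mult)
qed

lemma cf_mult_nz:
  assumes "cf (A * B) (i,j) \<noteq> 0"
  shows "\<exists>i1 j1 i2 j2. i = i1 + i2 \<and> j = j1 + j2 \<and> cf A (i1,j1) \<noteq> 0 \<and> cf B (i2,j2) \<noteq> 0"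
proof (rule ccontr)
  assume "\<not> ?thesis"
  then have "\<And>k l. k \<le> i \<Longrightarrow> l \<le> j \<Longrightarrow> cf A (k,l) * cf B (i-k, j-l) = 0"
    by (metis add_diff_inverse_nat mult_eq_0_iff not_le)
  then have "cf (A * B) (i,j) = 0" unfolding cf_mult by (intro sum.neutral ballI) simp
  then show False using assms by simp
qed

definition Fcn :: "nat \<Rightarrow> bipoly" where
  "Fcn n = (\<lambda>(i,j). if i + j = n then of_nat (n choose i) else 0)"

lemma supp_Fcn: "supp2 (Fcn n) = (\<lambda>i. (i, n-i)) ` {..n}"
  by (auto simp: supp2_def Fcn_def image_iff split: if_splits)

lemma Fcn_bipoly: "is_bipoly (Fcn n)"
  by (simp add: is_bipoly_def supp_Fcn)

lemma nterms_Fcn: "nterms (Fcn n) = n + 1"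
proof -
  have "inj_on (\<lambda>i. (i, n-i)) {..n}" by (auto simp: inj_on_def)
  then show ?thesis by (simp add: nterms_def supp_Fcn card_image)
qed

lemma beval_Fcn: "beval (Fcn n) x y = (x + y) ^ n"
proof -
  have "inj_on (\<lambda>i. (i, n-i)) {..n}" by (auto simp: inj_on_def)
  then have "beval (Fcn n) x y = (\<Sum>i\<le>n. of_real (Fcn n (i, n-i)) * x ^ i * y ^ (n-i))"
    by (simp add: beval_def supp_Fcn sum.reindex)
  also have "\<dots> = (\<Sum>i\<le>n. of_nat (n choose i) * x ^ i * y ^ (n-i))"
    by (intro sum.cong) (auto simp: Fcn_def)
  also have "\<dots> = (x + y) ^ n" by (simp add: binomial_ring)
  finally show ?thesis .
qed

lemma Fcn_nonneg: "Fcn n p \<ge> 0"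
  by (auto simp: Fcn_def split: prod.splits)

abbreviation FP :: "nat \<Rightarrow> pp" where "FP n \<equiv> toP (Fcn n)"

lemma ev_FP: "ev (FP n) x y = (x + y) ^ n"
  by (simp add: ev_toP beval_Fcn)

lemma cf_FP: "cf (FP n) = Fcn n"
  by (simp add: cf_toP Fcn_bipoly)

lemma FP_power: "FP m ^ k = FP (m * k)"
  by (rule ev_unique_eq) (simp add: ev_FP power_mult)

lemma nonneg_FP: "nonneg (FP n)"
  by (simp add: nonneg_def cf_FP Fcn_nonneg)


lemma part1:
  assumes m2: "m \<ge> 2" and adm: "admissible m \<eta> G"
  shows "nterms G = m + 1 \<or> nterms G \<ge> 2 * m + 1"
proof -
  from adm obtain H where Gb: "is_bipoly G" and Gnn: "\<And>p. G p \<ge> 0" and G00: "G (0,0) = 0"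
    and Hb: "is_bipoly H" and Hnn: "\<And>p. H p \<ge> 0"
    and iden: "\<And>x y :: real. beval G x y = (x + y) ^ m - beval H x y + beval H x y * (x + y) ^ m"
    unfolding admissible_def by blast
  have eq: "toP G = FP m - toP H + toP H * FP m"
    by (rule ev_unique_eq) (simp add: ev_toP beval_Fcn iden)
  define QP where "QP = toP H + 1"
  have eq2: "toP G = QP * FP m - QP + 1"
    unfolding eq QP_def by (simp add: algebra_simps)
  have Gc: "\<And>p. G p = cf (QP * FP m) p - cf QP p + (if p = (0,0) then 1 else 0)"
  proof -
    fix p
    have "G p = cf (toP G) p" by (simp add: cf_toP Gb)
    also have "\<dots> = cf (QP * FP m) p - cf QP p + (if p = (0,0) then 1 else 0)"
      unfolding eq2 by (simp add: cf_one)
    finally show "G p = \<dots>" .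
  qed
  have cfQ: "\<And>p. cf QP p = H p + (if p = (0,0) then 1 else 0)"
    by (simp add: QP_def cf_toP Hb cf_one)
  have nnQ: "nonneg QP" unfolding nonneg_def cfQ using Hnn by (simp add: add_nonneg_nonneg)
  have lowdeg: "\<And>i j. cf (QP * FP m) (i,j) \<noteq> 0 \<Longrightarrow> i + j \<ge> m"
  proof -
    fix i j assume "cf (QP * FP m) (i,j) \<noteq> 0"
    from cf_mult_nz[OF this] obtain i1 j1 i2 j2 where
      "i = i1 + i2" "j = j1 + j2" "cf (FP m) (i2,j2) \<noteq> 0" by blast
    then show "i + j \<ge> m" by (simp add: cf_FP) (auto simp: Fcn_def split: if_splits)
  qed
  show ?thesis
  proof (cases "\<forall>p. H p = 0")
    case True
    then have "H = (\<lambda>_. 0)" by auto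
    then have "toP H = 0" by (simp add: toP_def supp2_def)
    then have "toP G = FP m" using eq by simp
    then have "G = Fcn m" by (metis cf_toP Gb cf_FP)
    then show ?thesis by (simp add: nterms_Fcn)
  next
    case False
    then obtain p0 where "H p0 \<noteq> 0" by blast
    have "cf (QP * FP m) (0,0) = 0" using lowdeg[of 0 0] m2 by auto
    then have "H (0,0) = 0" using Gc[of "(0,0)"] G00 cfQ[of "(0,0)"] by simp
    then have p0: "p0 \<noteq> (0,0)" using \<open>H p0 \<noteq> 0\<close> by auto
    define d where "d = fst p0 + snd p0"
    have d0: "d > 0" using p0 unfolding d_def by (cases p0) auto
    define A where "A = supp2 (cf QP)"
    have finA: "finite A" unfolding A_def using cf_finite is_bipoly_def by blast
    have posA: "\<And>a. a \<in> A \<Longrightarrow> cf QP a > 0"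
      using nnQ unfolding A_def supp2_def nonneg_def by (metis less_eq_real_def mem_Collect_eq)
    have A00: "(0,0) \<in> A" unfolding A_def supp2_def using cfQ[of "(0,0)"] Hnn[of "(0,0)"] by simp
    have p0A: "p0 \<in> A" unfolding A_def supp2_def using cfQ[of p0] p0 \<open>H p0 \<noteq> 0\<close> by simp
    define Ad where "Ad = {a \<in> A. fst a + snd a = d}"
    have finAd: "finite Ad" using finA unfolding Ad_def by simp
    have p0Ad: "p0 \<in> Ad" using p0A unfolding Ad_def d_def by simp
    define b1 where "b1 = Max (fst ` Ad)"
    have "b1 \<in> fst ` Ad" unfolding b1_def using finAd p0Ad by (intro Max_in) auto
    then obtain b where bAd: "b \<in> Ad" and b1: "fst b = b1" by auto
    have bmax: "\<And>a. a \<in> Ad \<Longrightarrow> fst a \<le> b1" unfolding b1_def using finAd by (intro Max_ge) auto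
    have pos: "\<And>a t. a \<in> A \<Longrightarrow> t \<le> m \<Longrightarrow> cf (QP * FP m) (fst a + t, snd a + (m - t)) > 0"
    proof -
      fix a t assume aA: "a \<in> A" and tm: "t \<le> m"
      have "cf QP (fst a, snd a) * cf (FP m) (t, m - t) \<le> cf (QP * FP m) (fst a + t, snd a + (m - t))"
        by (rule cf_mult_ge[OF nnQ nonneg_FP])
      moreover have "cf QP (fst a, snd a) * cf (FP m) (t, m - t) > 0"
        using posA[OF aA] tm by (simp add: cf_FP) (simp add: Fcn_def)
      ultimately show "cf (QP * FP m) (fst a + t, snd a + (m - t)) > 0" by linarith
    qed
    define S1 where "S1 = (\<lambda>a. (fst a + 0, snd a + (m - 0))) ` A"
    define R0 where "R0 = (\<lambda>t. (fst (0::nat,0::nat) + t, snd (0::nat,0::nat) + (m - t))) ` {1..m}"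
    define Rd where "Rd = (\<lambda>t. (fst b + t, snd b + (m - t))) ` {1..m}"
    define B where "B = S1 \<union> R0 \<union> Rd"
    have bA: "b \<in> A" using bAd unfolding Ad_def by simp
    have Bpos: "\<And>p. p \<in> B \<Longrightarrow> cf (QP * FP m) p > 0"
    proof -
      fix p assume "p \<in> B"
      then consider (a) a where "a \<in> A" "p = (fst a + 0, snd a + (m - 0))"
        | (b) t where "t \<le> m" "p = (fst (0::nat,0::nat) + t, snd (0::nat,0::nat) + (m - t))"
        | (c) t where "t \<le> m" "p = (fst b + t, snd b + (m - t))"
        unfolding B_def S1_def R0_def Rd_def by auto
      then show "cf (QP * FP m) p > 0"
      proof cases
        case a then show ?thesis using pos[of a 0] by simp
      next
        case b then show ?thesis using pos[OF A00 b(1)] by simp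
      next
        case c then show ?thesis using pos[OF bA c(1)] by simp
      qed
    qed
    have BA: "B - A \<subseteq> supp2 G"
    proof
      fix p assume pB: "p \<in> B - A"
      then have "cf QP p = 0" unfolding A_def supp2_def by simp
      moreover have "p \<noteq> (0,0)" using pB A00 by auto
      ultimately have "G p = cf (QP * FP m) p" using Gc[of p] by simp
      then show "p \<in> supp2 G" using Bpos[of p] pB by (simp add: supp2_def)
    qed
    have finB: "finite B" unfolding B_def S1_def R0_def Rd_def using finA by simp
    have cS1: "card S1 = card A" unfolding S1_def by (rule card_image) (auto simp: inj_on_def)
    have cR0: "card R0 = m" unfolding R0_def by (subst card_image) (auto simp: inj_on_def)
    have cRd: "card Rd = m" unfolding Rd_def by (subst card_image) (auto simp: inj_on_def)
    have dis1: "S1 \<inter> R0 = {}" unfolding S1_def R0_def by auto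
    have dis2: "S1 \<inter> Rd = {}"
    proof (rule ccontr)
      assume "S1 \<inter> Rd \<noteq> {}"
      then obtain p where "p \<in> S1" "p \<in> Rd" by blast
      then obtain a t where aA: "a \<in> A" and t: "t \<in> {1..m}"
        and e: "(fst a + 0, snd a + (m - 0)) = (fst b + t, snd b + (m - t))"
        unfolding S1_def Rd_def by (auto elim!: imageE)
      have "fst a + snd a = d" using e t bAd unfolding Ad_def by auto
      then have "a \<in> Ad" using aA unfolding Ad_def by simp
      then have "fst a \<le> b1" by (rule bmax)
      then show False using e t b1 by auto
    qed
    have dis3: "R0 \<inter> Rd = {}"
    proof -
      show ?thesis
      proof (rule ccontr)
        assume "R0 \<inter> Rd \<noteq> {}"
        then obtain p where "p \<in> R0" "p \<in> Rd" by blast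
        then obtain s t where s: "s \<in> {1..m}" and t: "t \<in> {1..m}"
          and e: "(fst (0::nat,0::nat) + s, snd (0::nat,0::nat) + (m - s)) = (fst b + t, snd b + (m - t))"
          unfolding R0_def Rd_def by (auto elim!: imageE)
        have "fst b + t + (snd b + (m - t)) = d + m" using t bAd unfolding Ad_def by auto
        then show False using e s d0 by auto
      qed
    qed
    have cB: "card B = card A + 2 * m"
    proof -
      have f1: "finite S1" "finite R0" "finite Rd" unfolding S1_def R0_def Rd_def using finA by auto
      have "card B = card (S1 \<union> R0) + card Rd"
        unfolding B_def using f1 dis2 dis3 by (intro card_Un_disjoint) auto
      also have "card (S1 \<union> R0) = card S1 + card R0"
        using f1 dis1 by (intro card_Un_disjoint) auto
      finally show ?thesis using cS1 cR0 cRd by simp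
    qed
    have n00: "(0,0) \<notin> B" unfolding B_def S1_def R0_def Rd_def using m2 by auto
    have "B \<inter> A \<subseteq> A - {(0,0)}" using n00 by auto
    then have "card (B \<inter> A) \<le> card A - 1"
      using card_mono[OF _ \<open>B \<inter> A \<subseteq> A - {(0,0)}\<close>] finA A00 by simp
    moreover have "card (B - A) = card B - card (B \<inter> A)"
      using finB by (simp add: card_Diff_subset_Int)
    moreover have "card A \<ge> 1" using finA A00 card_0_eq by fastforce
    ultimately have "card (B - A) \<ge> 2 * m + 1" using cB by linarith
    moreover have "card (B - A) \<le> nterms G"
      unfolding nterms_def using Gb BA unfolding is_bipoly_def by (intro card_mono)
    ultimately show ?thesis by linarith
  qed
qed


lemma beval_rot:
  fixes \<eta> x y :: complex
  assumes "\<eta> ^ m = 1" "\<And>p. p \<in> supp2 c \<Longrightarrow> m dvd fst p + snd p"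
  shows "beval c (\<eta> * x) (\<eta> * y) = beval c x y"
  unfolding beval_def
proof (intro sum.cong refl)
  fix p assume "p \<in> supp2 c"
  then have "m dvd fst p + snd p" by (rule assms(2))
  then obtain k where k: "fst p + snd p = m * k" by (elim dvdE)
  have "\<eta> ^ (fst p + snd p) = 1" using k assms(1) by (simp add: power_mult)
  then have "\<eta> ^ fst p * \<eta> ^ snd p = 1" by (simp add: power_add)
  then show "of_real (c p) * (\<eta> * x) ^ fst p * (\<eta> * y) ^ snd p = of_real (c p) * x ^ fst p * y ^ snd p"
    by (simp add: power_mult_distrib algebra_simps)
qed

lemma part2:
  assumes m2: "m \<ge> 2" and eta: "\<eta> ^ m = 1"
  shows "admissible m \<eta> (Fcn m) \<and> nterms (Fcn m) = m + 1"
proof -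
  have z: "beval (\<lambda>_. 0) x y = 0" for x y :: real by (simp add: beval_def supp2_def)
  have inv: "beval (Fcn m) (\<eta> * x) (\<eta> * y) = beval (Fcn m) x y" for x y :: complex
    by (simp add: beval_Fcn power_mult_distrib eta flip: distrib_left)
  have "is_bipoly (\<lambda>_::nat\<times>nat. 0::real)" by (simp add: is_bipoly_def supp2_def)
  moreover have "Fcn m (0,0) = 0" using m2 by (simp add: Fcn_def)
  ultimately show ?thesis unfolding admissible_def
    using inv z by (auto simp: Fcn_bipoly Fcn_nonneg nterms_Fcn beval_Fcn intro!: exI[of _ "\<lambda>_. 0"])
qed

lemma binom_ge2: "0 < i \<Longrightarrow> i < n \<Longrightarrow> (n choose i) \<ge> 2"
proof -
  assume a: "0 < i" "i < n"
  then obtain n' i' where n: "n = Suc n'" and i: "i = Suc i'" by (metis gr0_implies_Suc less_imp_Suc_add)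
  have "(n' choose i') > 0" "(n' choose Suc i') > 0" using a n i by auto
  then show ?thesis using n i by (simp del: zero_less_binomial_iff)
qed

lemma telescope:
  fixes f :: real
  assumes "K \<ge> 1"
  shows "(\<Sum>k\<in>{1..<K}. f ^ k) * f - (\<Sum>k\<in>{1..<K}. f ^ k) = f ^ K - f"
  using assms
proof (induction K rule: dec_induct)
  case base then show ?case by simp
next
  case (step n)
  then show ?case by (simp add: sum.atLeastLessThan_Suc algebra_simps)
qed


lemma part3:
  assumes m2: "m \<ge> 2" and eta: "\<eta> ^ m = 1" and N: "N \<ge> 2 * m + 1"
  shows "\<exists>G. admissible m \<eta> G \<and> nterms G = N"
proof -
  define K where "K = (N - 1) div m - 1"
  define s where "s = N - (K + 1) * m"
  have m0: "m > 0" using m2 by simp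
  have q2: "(N - 1) div m \<ge> 2"
  proof -
    have "2 * m \<le> N - 1" using N by simp
    then have "2 * m div m \<le> (N - 1) div m" by (rule div_le_mono)
    then show ?thesis using m0 by simp
  qed
  have K1: "K \<ge> 1" using q2 unfolding K_def by simp
  have KS: "K + 1 = (N - 1) div m" using q2 unfolding K_def by simp
  have dm: "(N - 1) div m * m + (N - 1) mod m = N - 1" by simp
  have modlt: "(N - 1) mod m < m" using m0 by simp
  have s_eq: "s = (N - 1) mod m + 1" unfolding s_def KS using dm N by linarith
  have s1: "s \<ge> 1" and sm: "s \<le> m" using s_eq modlt by auto
  have le: "(K + 1) * m \<le> N" unfolding KS using dm by linarith
  have Nsum: "N = K * m + s + m" unfolding s_def using le by (simp add: algebra_simps)
  have Km: "K * m \<ge> m" using K1 by simp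
  define hc :: bipoly where "hc = (\<lambda>(i,j). if i < s \<and> i + j = K * m then 1 else 0)"
  have hcb: "is_bipoly hc"
  proof -
    have "supp2 hc \<subseteq> {..<s} \<times> {..K*m}" by (auto simp: supp2_def hc_def split: if_splits)
    then show ?thesis unfolding is_bipoly_def by (rule finite_subset) simp
  qed
  define hp where "hp = toP hc"
  have cfh: "cf hp = hc" unfolding hp_def by (rule cf_toP[OF hcb])
  have nnh: "nonneg hp" by (simp add: nonneg_def cfh hc_def)
  define Gp where "Gp = FP (K * m) - hp + hp * FP m"
  define Hp where "Hp = (\<Sum>k\<in>{1..<K}. FP (m * k)) + hp"
  have prod_nz: "\<And>i j. cf (hp * FP m) (i,j) \<noteq> 0 \<Longrightarrow> i + j = (K + 1) * m \<and> i < s + m"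
  proof -
    fix i j assume "cf (hp * FP m) (i,j) \<noteq> 0"
    from cf_mult_nz[OF this] obtain i1 j1 i2 j2 where
      e: "i = i1 + i2" "j = j1 + j2" and a: "hc (i1,j1) \<noteq> 0" and b: "Fcn m (i2,j2) \<noteq> 0"
      by (auto simp: cfh cf_FP)
    from a have "i1 < s" "i1 + j1 = K * m" by (auto simp: hc_def split: if_splits)
    moreover from b have "i2 + j2 = m" by (auto simp: Fcn_def split: if_splits)
    ultimately show "i + j = (K + 1) * m \<and> i < s + m" using e by simp
  qed
  have prod_pos: "\<And>i j. i + j = (K + 1) * m \<Longrightarrow> i < s + m \<Longrightarrow> cf (hp * FP m) (i,j) > 0"
  proof -
    fix i j assume ij: "i + j = (K + 1) * m" and ism: "i < s + m"
    define i1 where "i1 = (if i < s then i else s - 1)"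
    define i2 where "i2 = i - i1"
    have i1s: "i1 < s" using s1 unfolding i1_def by auto
    have i2m: "i2 \<le> m" using ism s1 unfolding i2_def i1_def by auto
    have i12: "i = i1 + i2" unfolding i2_def i1_def by auto
    have i1le: "i1 \<le> K * m" using i1s sm Km by linarith
    have e: "i1 + i2 + j = K * m + m" using ij i12 by (simp add: algebra_simps)
    have j12: "j = (K * m - i1) + (m - i2)" using e i1le i2m by linarith
    have "cf hp (i1, K * m - i1) * cf (FP m) (i2, m - i2) \<le> cf (hp * FP m) (i1 + i2, (K * m - i1) + (m - i2))"
      by (rule cf_mult_ge[OF nnh nonneg_FP])
    moreover have "cf hp (i1, K * m - i1) * cf (FP m) (i2, m - i2) > 0"
      using i1s i1le i2m by (simp add: cfh cf_FP) (simp add: hc_def Fcn_def)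
    ultimately show "cf (hp * FP m) (i,j) > 0" using i12 j12 by simp
  qed
  have cfG: "\<And>i j. cf Gp (i,j) = Fcn (K * m) (i,j) - hc (i,j) + cf (hp * FP m) (i,j)"
    by (simp add: Gp_def cf_FP cfh)
  define D1 where "D1 = (\<lambda>i. (i, K * m - i)) ` {1..K*m}"
  define D2 where "D2 = (\<lambda>i. (i, (K + 1) * m - i)) ` {..<s+m}"
  have suppG: "supp2 (cf Gp) = D1 \<union> D2"
  proof (intro set_eqI iffI)
    fix p assume "p \<in> supp2 (cf Gp)"
    then obtain i j where p: "p = (i,j)" and nz: "cf Gp (i,j) \<noteq> 0" by (cases p) (auto simp: supp2_def)
    show "p \<in> D1 \<union> D2"
    proof (cases "cf (hp * FP m) (i,j) = 0")
      case True
      then have "Fcn (K * m) (i,j) - hc (i,j) \<noteq> 0" using nz cfG by simp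
      then have ij: "i + j = K * m" and "i \<noteq> 0"
        using s1 by (cases "i = 0"; auto simp: Fcn_def hc_def split: if_splits)+
      then have "i \<in> {1..K*m}" "j = K * m - i" by auto
      then show ?thesis unfolding p D1_def by auto
    next
      case False
      from prod_nz[OF this] have "i < s + m" "j = (K + 1) * m - i" by auto
      then show ?thesis unfolding p D2_def by auto
    qed
  next
    fix p assume "p \<in> D1 \<union> D2"
    then consider (a) i where "i \<in> {1..K*m}" "p = (i, K * m - i)"
      | (b) i where "i < s + m" "p = (i, (K + 1) * m - i)"
      unfolding D1_def D2_def by auto
    then show "p \<in> supp2 (cf Gp)"
    proof cases
      case a
      have z: "cf (hp * FP m) (i, K * m - i) = 0"
        using prod_nz[of i "K * m - i"] a m0 by auto
      have "Fcn (K * m) (i, K * m - i) - hc (i, K * m - i) > 0"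
      proof (cases "i < s")
        case True
        then have "i < K * m" using sm Km by linarith
        then have "(K * m choose i) \<ge> 2" using binom_ge2 a by auto
        then have "real (K * m choose i) \<ge> 2" by (metis of_nat_le_iff of_nat_numeral)
        then show ?thesis using a True by (simp add: Fcn_def hc_def)
      next
        case False
        then show ?thesis using a by (simp add: Fcn_def hc_def)
      qed
      then show ?thesis using a z cfG by (simp add: supp2_def)
    next
      case b
      have KK: "(K + 1) * m = K * m + m" by simp
      have "i \<le> (K + 1) * m" unfolding KK using b(1) sm Km by linarith
      then have ij: "i + ((K + 1) * m - i) = (K + 1) * m" by simp
      have "Fcn (K * m) (i, (K + 1) * m - i) = 0" "hc (i, (K + 1) * m - i) = 0"
        using ij m0 by (auto simp: Fcn_def hc_def)
      then show ?thesis using prod_pos[OF ij b(1)] b cfG by (simp add: supp2_def)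
    qed
  qed
  have ntG: "nterms (cf Gp) = N"
  proof -
    have c1: "card D1 = K * m" unfolding D1_def by (subst card_image) (auto simp: inj_on_def)
    have c2: "card D2 = s + m" unfolding D2_def by (subst card_image) (auto simp: inj_on_def)
    have "D1 \<inter> D2 = {}" unfolding D1_def D2_def using m0 sm Km by auto
    then have "card (D1 \<union> D2) = card D1 + card D2"
      unfolding D1_def D2_def by (intro card_Un_disjoint) auto
    then show ?thesis unfolding nterms_def suppG using c1 c2 Nsum by simp
  qed
  have Gnn: "\<And>p. cf Gp p \<ge> 0"
  proof -
    fix p :: "nat \<times> nat"
    obtain i j where p: "p = (i,j)" by (cases p)
    have "Fcn (K * m) (i,j) - hc (i,j) \<ge> 0"
    proof (cases "i + j = K * m")
      case True
      then have "(K * m choose i) > 0" by simp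
      then have "real (K * m choose i) \<ge> 1" by linarith
      then show ?thesis using True by (auto simp: Fcn_def hc_def)
    qed (auto simp: Fcn_def hc_def)
    moreover have "cf (hp * FP m) (i,j) \<ge> 0" by (rule cf_mult_nonneg[OF nnh nonneg_FP])
    ultimately show "cf Gp p \<ge> 0" using p cfG by simp
  qed
  have G00: "cf Gp (0,0) = 0"
  proof -
    have "(0,0) \<notin> D1 \<union> D2" unfolding D1_def D2_def using m0 K1 by auto
    then show ?thesis using suppG unfolding supp2_def by blast
  qed
  have D2le: "\<And>i. i < s + m \<Longrightarrow> i + ((K + 1) * m - i) = (K + 1) * m"
  proof -
    fix i assume "i < s + m"
    moreover have "(K + 1) * m = K * m + m" by simp
    ultimately have "i \<le> (K + 1) * m" using sm Km by linarith
    then show "i + ((K + 1) * m - i) = (K + 1) * m" by simp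
  qed
  have degs: "\<And>p. p \<in> supp2 (cf Gp) \<Longrightarrow> m dvd fst p + snd p"
  proof -
    fix p assume "p \<in> supp2 (cf Gp)"
    then consider (a) i where "i \<in> {1..K*m}" "p = (i, K * m - i)"
      | (b) i where "i < s + m" "p = (i, (K + 1) * m - i)"
      unfolding suppG D1_def D2_def by auto
    then show "m dvd fst p + snd p"
    proof cases
      case a then show ?thesis by simp
    next
      case b then show ?thesis using D2le[OF b(1)] by (simp only: fst_conv snd_conv) simp
    qed
  qed
  have Hnn: "\<And>p. cf Hp p \<ge> 0"
    by (simp add: Hp_def cf_sum cf_FP cfh Fcn_nonneg hc_def sum_nonneg split: prod.splits)
  have evG: "ev Gp x y = (x + y) ^ m - ev Hp x y + ev Hp x y * (x + y) ^ m" for x y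
  proof -
    define f where "f = (x + y) ^ m"
    have "ev Hp x y = (\<Sum>k\<in>{1..<K}. f ^ k) + ev hp x y"
      by (simp add: Hp_def ev_sum ev_FP f_def power_mult)
    moreover have "ev Gp x y = f ^ K - ev hp x y + ev hp x y * f"
      by (simp add: Gp_def ev_FP f_def power_mult mult.commute[of K m])
    ultimately show ?thesis using telescope[OF K1, of f] unfolding f_def[symmetric]
      by (simp add: algebra_simps)
  qed
  have "admissible m \<eta> (cf Gp)"
    unfolding admissible_def
  proof (intro conjI allI impI exI[of _ "cf Hp"])
    show "is_bipoly (cf Gp)" by (rule cf_finite)
    show "beval (cf Gp) (\<eta> * x) (\<eta> * y) = beval (cf Gp) x y" for x y :: complex
      by (rule beval_rot[OF eta degs])
    show "beval (cf Gp) x y = 1" if "x + y = 1" for x y :: real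
      using that by (simp add: beval_cf Gp_def ev_FP)
    show "cf Gp p \<ge> 0" for p by (rule Gnn)
    show "cf Gp (0,0) = 0" by (rule G00)
    show "is_bipoly (cf Hp)" by (rule cf_finite)
    show "cf Hp p \<ge> 0" for p by (rule Hnn)
    show "beval (cf Gp) x y = (x + y) ^ m - beval (cf Hp) x y + beval (cf Hp) x y * (x + y) ^ m" for x y :: real
      by (simp add: beval_cf evG)
  qed
  then show ?thesis using ntG by blast
qed

theorem mainTheorem8:
  fixes m :: nat and \<eta> :: complex
  assumes "m \<ge> 2"
    and "\<eta> ^ m = 1"
    and "\<forall>k. 0 < k \<and> k < m \<longrightarrow> \<eta> ^ k \<noteq> 1"
  shows "(\<forall>G. admissible m \<eta> G \<longrightarrow> nterms G = m + 1 \<or> nterms G \<ge> 2 * m + 1)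
       \<and> (\<exists>G. admissible m \<eta> G \<and> nterms G = m + 1)
       \<and> (\<forall>N. N \<ge> 2 * m + 1 \<longrightarrow> (\<exists>G. admissible m \<eta> G \<and> nterms G = N))"
  using part1[OF assms(1)] part2[OF assms(1,2)] part3[OF assms(1,2)] by blast

end
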